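(* Let $G$ be a simple undirected connected graph on vertices $u_1,\dots,u_n$ with Laplacian $L$, let $u_a\neq u_b$ satisfy $N(u_a)\setminus\{u_b\}=N(u_b)\setminus\{u_a\}$, let $M=(\mathbf e_a-\mathbf e_b)(\mathbf e_a-\mathbf e_b)^T$, $\alpha\in\mathbb R$ and $L^\alpha=L+\alpha M$. Suppose $L$ is almost periodic at $u_p$ with respect to a sequence $(\tau_k)$ of nonzero reals. Then: (1) if $p\in\{a,b\}$ and $2\alpha\tau_k\in\pi(2\mathbb Z+1)$ for all $k$, then $L^\alpha$ exhibits pretty good state transfer between $u_a$ and $u_b$ with respect to $(\tau_k)$; (2) if $p\notin\{a,b\}$, then $L^\alpha$ is almost periodic at $u_p$ with respect to $(\tau_k)$.
   Context: $N(u)$ is the neighbourhood of $u$; $L=D-A$; $\mathbf e_j$ is the standard basis vector of $u_j$. For a real symmetric $H$, $U_H(t)=\exp(-itH)$. $H$ exhibits pretty good state transfer between distinct $u_p,u_q$ with respect to a real sequence $(\tau_k)$ if $\lim_{k\to\infty}U_H(\tau_k)\mathbf e_p=\gamma\mathbf e_q$ for some $\gamma\in\mathbb C$; $H$ is almost periodic at $u_p$ with respect to a sequence $(\tau_k)$ of nonzero reals if $\lim_{k\to\infty}U_H(\tau_k)\mathbf e_p=\gamma\mathbf e_p$ for some $\gamma\in\mathbb C$. *)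

theory Defs
  imports "HOL-Analysis.Analysis"
begin

definition simple_graph :: "('n \<Rightarrow> 'n \<Rightarrow> bool) \<Rightarrow> bool" where
  "simple_graph E \<longleftrightarrow> (\<forall>u v. E u v \<longleftrightarrow> E v u) \<and> (\<forall>u. \<not> E u u)"

definition connected_graph :: "('n \<Rightarrow> 'n \<Rightarrow> bool) \<Rightarrow> bool" where
  "connected_graph E \<longleftrightarrow> (\<forall>u v. E\<^sup>*\<^sup>* u v)"

definition nbhd :: "('n \<Rightarrow> 'n \<Rightarrow> bool) \<Rightarrow> 'n \<Rightarrow> 'n set" where
  "nbhd E u = {v. E u v}"

definition laplacian :: "('n::finite \<Rightarrow> 'n \<Rightarrow> bool) \<Rightarrow> complex^'n^'n" where
  "laplacian E = (\<chi> i j. (if i = j then of_nat (card (nbhd E i)) else 0)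
                         - (if E i j then 1 else 0))"

definition evec :: "'n::finite \<Rightarrow> complex^'n" where
  "evec j = (\<chi> i. if i = j then 1 else 0)"

definition Mab :: "'n::finite \<Rightarrow> 'n \<Rightarrow> complex^'n^'n" where
  "Mab a b = (\<chi> i j. (evec a - evec b) $ i * (evec a - evec b) $ j)"

primrec mpow :: "complex^'n^'n \<Rightarrow> nat \<Rightarrow> complex^'n^'n" where
  "mpow A 0 = mat 1"
| "mpow A (Suc k) = A ** mpow A k"

definition mexp :: "complex^'n^'n \<Rightarrow> complex^'n^'n" where
  "mexp A = (\<chi> i j. \<Sum>k. (mpow A k) $ i $ j / of_nat (fact k))"

definition cscale :: "complex \<Rightarrow> complex^'n^'n \<Rightarrow> complex^'n^'n" where
  "cscale c A = (\<chi> i j. c * A $ i $ j)"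

definition U :: "complex^'n^'n \<Rightarrow> real \<Rightarrow> complex^'n^'n" where
  "U H t = mexp (cscale (- (\<i> * of_real t)) H)"

definition pgst :: "complex^'n^'n \<Rightarrow> 'n::finite \<Rightarrow> 'n \<Rightarrow> (nat \<Rightarrow> real) \<Rightarrow> bool" where
  "pgst H p q \<tau> \<longleftrightarrow> p \<noteq> q \<and>
     (\<exists>\<gamma>::complex. (\<lambda>k. U H (\<tau> k) *v evec p) \<longlonglongrightarrow> \<gamma> *s evec q)"

definition almost_periodic :: "complex^'n^'n \<Rightarrow> 'n::finite \<Rightarrow> (nat \<Rightarrow> real) \<Rightarrow> bool" where
  "almost_periodic H p \<tau> \<longleftrightarrow> (\<forall>k. \<tau> k \<noteq> 0) \<and>
     (\<exists>\<gamma>::complex. (\<lambda>k. U H (\<tau> k) *v evec p) \<longlonglongrightarrow> \<gamma> *s evec p)"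

end

theory Submission
  imports Defs
begin


lemma mpow_bound:
  fixes A :: "complex^'n::finite^'n"
  shows "norm (mpow A k $ i $ j) \<le> (\<Sum>i\<in>UNIV. \<Sum>j\<in>UNIV. norm (A$i$j))^k"
proof (induction k arbitrary: i j)
  case 0
  then show ?case by (simp add: mat_def)
next
  case (Suc k)
  define S where "S = (\<Sum>i\<in>UNIV. \<Sum>j\<in>UNIV. norm (A$i$j))"
  have "norm (mpow A (Suc k) $ i $ j) = norm (\<Sum>m\<in>UNIV. A$i$m * mpow A k $ m $ j)"
    by (simp add: matrix_matrix_mult_def)
  also have "\<dots> \<le> (\<Sum>m\<in>UNIV. norm (A$i$m) * S^k)"
    by (rule order_trans[OF norm_sum sum_mono]) (simp add: norm_mult mult_left_mono Suc[unfolded S_def[symmetric]])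
  also have "\<dots> = (\<Sum>m\<in>UNIV. norm (A$i$m)) * S^k" by (simp add: sum_distrib_right)
  also have "\<dots> \<le> S * S^k"
  proof (rule mult_right_mono)
    show "(\<Sum>m\<in>UNIV. norm (A$i$m)) \<le> S" unfolding S_def
      by (rule member_le_sum[where f="\<lambda>i. \<Sum>j\<in>UNIV. norm (A$i$j)"]) (auto intro: sum_nonneg)
  qed (simp add: S_def sum_nonneg)
  finally show ?case by (simp add: S_def)
qed

lemma mpow_summable:
  fixes A :: "complex^'n::finite^'n"
  shows "summable (\<lambda>k. mpow A k $ i $ j / of_nat (fact k))"
proof (rule summable_comparison_test)
  define S where "S = (\<Sum>i\<in>UNIV. \<Sum>j\<in>UNIV. norm (A$i$j))"
  show "\<exists>N. \<forall>n\<ge>N. norm (mpow A n $ i $ j / of_nat (fact n)) \<le> inverse (fact n) * S ^ n"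
    using mpow_bound[of A] by (auto simp: S_def norm_divide divide_simps)
  show "summable (\<lambda>n. inverse (fact n) * S ^ n)" by (rule summable_exp)
qed

lemma mexp_mulvec:
  fixes A :: "complex^'n::finite^'n"
  shows "(mexp A *v w) $ i = (\<Sum>k. (mpow A k *v w) $ i / of_nat (fact k))"
proof -
  have "(mexp A *v w) $ i = (\<Sum>j\<in>UNIV. (\<Sum>k. mpow A k $ i $ j / of_nat (fact k)) * w$j)"
    by (simp add: mexp_def matrix_vector_mult_def)
  also have "\<dots> = (\<Sum>j\<in>UNIV. (\<Sum>k. mpow A k $ i $ j / of_nat (fact k) * w$j))"
    by (simp only: suminf_mult2[OF mpow_summable])
  also have "\<dots> = (\<Sum>k. \<Sum>j\<in>UNIV. mpow A k $ i $ j / of_nat (fact k) * w$j)"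
    by (rule suminf_sum[symmetric]) (intro summable_mult2 mpow_summable)
  also have "\<dots> = (\<Sum>k. (mpow A k *v w) $ i / of_nat (fact k))"
    by (simp add: matrix_vector_mult_def sum_divide_distrib)
  finally show ?thesis .
qed

lemma mexp_agree:
  fixes A B :: "complex^'n::finite^'n"
  assumes "\<And>k. mpow A k *v w = mpow B k *v w"
  shows "mexp A *v w = mexp B *v w"
  by (simp add: vec_eq_iff mexp_mulvec assms)

lemma smult_mulvec: "(A::complex^'n::finite^'n) *v (c *s x) = c *s (A *v x)"
  by (simp add: vec_eq_iff matrix_vector_mult_def sum_distrib_left algebra_simps)

lemma mpow_eigen:
  fixes A :: "complex^'n::finite^'n"
  assumes "A *v v = \<mu> *s v"
  shows "mpow A k *v v = \<mu>^k *s v"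
proof (induction k)
  case 0 then show ?case by simp
next
  case (Suc k)
  have "mpow A (Suc k) *v v = A *v (mpow A k *v v)" by (simp add: matrix_vector_mul_assoc)
  also have "\<dots> = \<mu>^Suc k *s v" using Suc by (simp add: smult_mulvec assms)
  finally show ?case .
qed

lemma mexp_eigen:
  fixes A :: "complex^'n::finite^'n"
  assumes "A *v v = \<mu> *s v"
  shows "mexp A *v v = exp \<mu> *s v"
proof -
  have "(\<lambda>k. \<mu>^k / of_nat (fact k) * v$i) sums (exp \<mu> * v$i)" for i
  proof -
    have "(\<lambda>n. \<mu> ^ n /\<^sub>R fact n) sums exp \<mu>" by (rule exp_converges)
    then have "(\<lambda>n. \<mu> ^ n /\<^sub>R fact n * v$i) sums (exp \<mu> * v$i)" by (rule sums_mult2)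
    then show ?thesis by (simp add: scaleR_conv_of_real divide_inverse mult_ac)
  qed
  then show ?thesis
    by (simp add: vec_eq_iff mexp_mulvec mpow_eigen[OF assms] sums_unique[symmetric])
qed



lemma cscale_mulvec: "cscale c A *v w = c *s (A *v (w::complex^'n::finite))"
  by (simp add: vec_eq_iff cscale_def matrix_vector_mult_def sum_distrib_left mult.assoc)

lemma add_mulvec: "(A + B) *v w = A *v w + B *v (w::complex^'n::finite)"
  by (simp add: vec_eq_iff matrix_vector_mult_def sum.distrib algebra_simps)

lemma sum_evec: "(\<Sum>j\<in>UNIV. evec a $ j * w $ j) = (w::complex^'n::finite) $ a"
proof -
  have "(\<Sum>j\<in>UNIV. evec a $ j * w $ j) = (\<Sum>j\<in>UNIV. if j = a then w $ j else 0)"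
    by (rule sum.cong) (auto simp: evec_def)
  then show ?thesis by simp
qed

lemma sum_evec2: "(\<Sum>j\<in>UNIV. f j * evec a $ j) = f (a::'n::finite)"
proof -
  have "(\<Sum>j\<in>UNIV. f j * evec a $ j) = (\<Sum>j\<in>UNIV. if j = a then f j else 0)"
    by (rule sum.cong) (auto simp: evec_def)
  then show ?thesis by simp
qed

lemma Mab_mulvec: "(Mab a b *v w) $ i = (evec a - evec b) $ i * ((w::complex^'n::finite) $ a - w $ b)"
proof -
  let ?v = "evec a - evec b"
  have "(Mab a b *v w) $ i = (\<Sum>j\<in>UNIV. ?v$i * (?v$j * w$j))"
    by (simp add: Mab_def matrix_vector_mult_def mult.assoc)
  also have "\<dots> = ?v$i * (\<Sum>j\<in>UNIV. ?v$j * w$j)" by (simp add: sum_distrib_left)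
  also have "(\<Sum>j\<in>UNIV. ?v$j * w$j) = w$a - w$b"
    by (simp add: left_diff_distrib sum_subtractf sum_evec)
  finally show ?thesis .
qed

lemma Mab_sym: "Mab a b = Mab b a"
  by (simp add: Mab_def vec_eq_iff algebra_simps)

lemma lap_sym: "simple_graph E \<Longrightarrow> laplacian E $ i $ j = laplacian E $ j $ i"
  by (auto simp: laplacian_def simple_graph_def)

definition lam :: "('n \<Rightarrow> 'n \<Rightarrow> bool) \<Rightarrow> 'n \<Rightarrow> 'n \<Rightarrow> complex" where
  "lam E a b = of_nat (card (nbhd E a)) + (if E a b then 1 else 0)"

lemma deg_eq:
  fixes E :: "'n::finite \<Rightarrow> 'n \<Rightarrow> bool"
  assumes "simple_graph E" "nbhd E a - {b} = nbhd E b - {a}"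
  shows "card (nbhd E a) + (if E a b then 0 else 1) = card (nbhd E b) + (if E a b then 0 else 1)"
proof -
  have s: "E u v \<longleftrightarrow> E v u" for u v using assms(1) by (auto simp: simple_graph_def)
  have "card (nbhd E a) = card (nbhd E a - {b}) + (if E a b then 1 else 0)"
  proof (cases "E a b")
    case True
    then have "b \<in> nbhd E a" by (simp add: nbhd_def)
    then show ?thesis using True card.remove[of "nbhd E a" b] by simp
  next
    case False
    then have "nbhd E a - {b} = nbhd E a" by (auto simp: nbhd_def)
    then show ?thesis using False by simp
  qed
  moreover have "card (nbhd E b) = card (nbhd E b - {a}) + (if E a b then 1 else 0)"
      proof (cases "E a b")
    case True
    then have "a \<in> nbhd E b" using s by (simp add: nbhd_def)
    then show ?thesis using True card.remove[of "nbhd E b" a] by simp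
  next
    case False
    then have "nbhd E b - {a} = nbhd E b" using s by (auto simp: nbhd_def)
    then show ?thesis using False by simp
  qed
  ultimately show ?thesis using assms(2) by simp
qed

lemma lap_eig:
  fixes E :: "'n::finite \<Rightarrow> 'n \<Rightarrow> bool"
  assumes "simple_graph E" "a \<noteq> b" "nbhd E a - {b} = nbhd E b - {a}"
  shows "laplacian E *v (evec a - evec b) = lam E a b *s (evec a - evec b)"
proof -
  have s: "E u v \<longleftrightarrow> E v u" for u v using assms(1) by (auto simp: simple_graph_def)
  have irr: "\<not> E u u" for u using assms(1) by (auto simp: simple_graph_def)
  have d: "card (nbhd E a) = card (nbhd E b)" using deg_eq[OF assms(1,3)] by simp
  have c: "E i a \<longleftrightarrow> E i b" if "i \<noteq> a" "i \<noteq> b" for i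
  proof -
    have "i \<in> nbhd E a - {b} \<longleftrightarrow> i \<in> nbhd E b - {a}" using assms(3) by simp
    then show ?thesis using that s by (auto simp: nbhd_def)
  qed
  have "(laplacian E *v (evec a - evec b)) $ i = laplacian E $ i $ a - laplacian E $ i $ b" for i
    by (simp add: matrix_vector_mult_def right_diff_distrib sum_subtractf sum_evec2)
  then show ?thesis using assms(2) c d s irr
    by (auto simp: vec_eq_iff laplacian_def lam_def evec_def)
qed

lemma lap_inv:
  fixes E :: "'n::finite \<Rightarrow> 'n \<Rightarrow> bool"
  assumes "simple_graph E" "a \<noteq> b" "nbhd E a - {b} = nbhd E b - {a}" "w $ a = w $ b"
  shows "(laplacian E *v w) $ a = (laplacian E *v w) $ b"
proof -
  let ?L = "laplacian E" and ?v = "evec a - evec b"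
  have "(?L *v w) $ a - (?L *v w) $ b = (\<Sum>j\<in>UNIV. (?L $ a $ j - ?L $ b $ j) * w $ j)"
    by (simp add: matrix_vector_mult_def sum_subtractf algebra_simps)
  also have "\<dots> = (\<Sum>j\<in>UNIV. (?L *v ?v) $ j * w $ j)"
    by (simp add: matrix_vector_mult_def right_diff_distrib sum_subtractf sum_evec2 lap_sym[OF assms(1)])
  also have "\<dots> = lam E a b * (\<Sum>j\<in>UNIV. ?v $ j * w $ j)"
    unfolding lap_eig[OF assms(1-3)] by (simp add: sum_distrib_left algebra_simps)
  also have "\<dots> = 0"
    by (simp add: left_diff_distrib sum_subtractf sum_evec assms(4))
  finally show ?thesis by simp
qed



lemma mpow_agree_gen:
  fixes A B :: "complex^'n::finite^'n"
  assumes "\<And>u. u$a = u$b \<Longrightarrow> A *v u = B *v u \<and> (A *v u)$a = (A *v u)$b" "w$a = w$b"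
  shows "mpow A k *v w = mpow B k *v w \<and> (mpow A k *v w)$a = (mpow A k *v w)$b"
proof (induction k)
  case 0 then show ?case using assms(2) by simp
next
  case (Suc k)
  have e: "mpow X (Suc k) *v w = X *v (mpow X k *v w)" for X :: "complex^'n^'n"
    by (simp add: matrix_vector_mul_assoc)
  obtain h1: "mpow A k *v w = mpow B k *v w" and h2: "(mpow A k *v w)$a = (mpow A k *v w)$b"
    using Suc by blast
  note h3 = assms(1)[OF h2]
  show ?case unfolding e using h1 h3 by metis
qed

lemma mexp_agree_gen:
  fixes A B :: "complex^'n::finite^'n"
  assumes "\<And>u. u$a = u$b \<Longrightarrow> A *v u = B *v u \<and> (A *v u)$a = (A *v u)$b" "w$a = w$b"
  shows "mexp A *v w = mexp B *v w \<and> (mexp A *v w)$a = (mexp A *v w)$b"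
proof
  show "mexp A *v w = mexp B *v w"
    by (rule mexp_agree) (use mpow_agree_gen[OF assms] in blast)
  show "(mexp A *v w)$a = (mexp A *v w)$b"
  proof -
    have "\<And>k. (mpow A k *v w)$a = (mpow A k *v w)$b" using mpow_agree_gen[OF assms] by blast
    then show ?thesis unfolding mexp_mulvec by (simp only:)
  qed
qed

context
  fixes E :: "'n::finite \<Rightarrow> 'n \<Rightarrow> bool" and a b :: 'n and \<alpha> :: real
  assumes sg: "simple_graph E" and ab: "a \<noteq> b" and nb: "nbhd E a - {b} = nbhd E b - {a}"
begin

lemma H_eig: "cscale c (laplacian E + cscale (of_real \<alpha>) (Mab a b)) *v (evec a - evec b)
   = (c * (lam E a b + 2 * of_real \<alpha>)) *s (evec a - evec b)"
proof -
  have m: "Mab a b *v (evec a - evec b) = 2 *s (evec a - evec b)"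
    using ab by (simp add: vec_eq_iff Mab_mulvec evec_def)
  show ?thesis
    unfolding cscale_mulvec add_mulvec lap_eig[OF sg ab nb] m by (simp add: vec_eq_iff algebra_simps)
qed

lemma L_eig: "cscale c (laplacian E) *v (evec a - evec b) = (c * lam E a b) *s (evec a - evec b)"
  unfolding cscale_mulvec lap_eig[OF sg ab nb] by (simp add: vec_eq_iff algebra_simps)

lemma step_agree: "u$a = u$b \<Longrightarrow>
  cscale c (laplacian E) *v u = cscale c (laplacian E + cscale (of_real \<alpha>) (Mab a b)) *v u \<and>
  (cscale c (laplacian E) *v u)$a = (cscale c (laplacian E) *v u)$b"
  using lap_inv[OF sg ab nb, of u]
  by (simp add: cscale_mulvec add_mulvec vec_eq_iff Mab_mulvec)

lemma U_agree:
  assumes "w$a = w$b"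
  shows "U (laplacian E + cscale (of_real \<alpha>) (Mab a b)) t *v w = U (laplacian E) t *v w"
    and "(U (laplacian E) t *v w)$a = (U (laplacian E) t *v w)$b"
  using mexp_agree_gen[OF step_agree assms, of "- (\<i> * of_real t)"] unfolding U_def by metis+

lemma U_eigH: "U (laplacian E + cscale (of_real \<alpha>) (Mab a b)) t *v (evec a - evec b)
   = exp (- (\<i> * of_real t) * (lam E a b + 2 * of_real \<alpha>)) *s (evec a - evec b)"
  unfolding U_def by (rule mexp_eigen[OF H_eig])

lemma U_eigL: "U (laplacian E) t *v (evec a - evec b)
   = exp (- (\<i> * of_real t) * lam E a b) *s (evec a - evec b)"
  unfolding U_def by (rule mexp_eigen[OF L_eig])

end

lemma exp_odd: "exp (- (\<i> * complex_of_real (pi * (2 * of_int m + 1)))) = -1"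
proof -
  have x: "pi * (2 * of_int m + 1) = pi * real_of_int (2*m+1)" by simp
  have "exp (- (\<i> * complex_of_real (pi * (2 * of_int m + 1)))) = cis (- (pi * real_of_int (2*m+1)))"
    unfolding x by (simp add: cis_conv_exp)
  also have "\<dots> = -1"
    using cos_npi_int[of "2*m+1"] sin_npi_int[of "2*m+1"] by (simp add: complex_eq_iff)
  finally show ?thesis .
qed


context
  fixes E :: "'n::finite \<Rightarrow> 'n \<Rightarrow> bool" and a b :: 'n and \<alpha> :: real
  assumes sg: "simple_graph E" and ab: "a \<noteq> b" and nb: "nbhd E a - {b} = nbhd E b - {a}"
begin

abbreviation "vv \<equiv> evec a - evec b"
abbreviation "w0 \<equiv> evec a - (1/2) *s vv"
abbreviation "HH \<equiv> laplacian E + cscale (of_real \<alpha>) (Mab a b)"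

lemma w0_ok: "w0 $ a = w0 $ b"
  using ab by (simp add: evec_def)

lemma ea_split: "evec a = w0 + (1/2) *s vv"
  by simp

lemma decompL: "U (laplacian E) t *v evec a
  = U (laplacian E) t *v w0 + ((1/2) * exp (- (\<i> * of_real t) * lam E a b)) *s vv"
proof -
  have "U (laplacian E) t *v evec a = U (laplacian E) t *v w0 + U (laplacian E) t *v ((1/2) *s vv)"
    by (subst ea_split) (rule matrix_vector_right_distrib)
  also have "\<dots> = U (laplacian E) t *v w0 + ((1/2) * exp (- (\<i> * of_real t) * lam E a b)) *s vv"
    unfolding smult_mulvec U_eigL[OF sg ab nb] by simp
  finally show ?thesis .
qed

lemma decompH: "U HH t *v evec a
  = U (laplacian E) t *v w0 + ((1/2) * exp (- (\<i> * of_real t) * (lam E a b + 2 * of_real \<alpha>))) *s vv"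
proof -
  have "U HH t *v evec a = U HH t *v w0 + U HH t *v ((1/2) *s vv)"
    by (subst ea_split) (rule matrix_vector_right_distrib)
  also have "\<dots> = U (laplacian E) t *v w0 + ((1/2) * exp (- (\<i> * of_real t) * (lam E a b + 2 * of_real \<alpha>))) *s vv"
    unfolding smult_mulvec U_eigH[OF sg ab nb] U_agree(1)[OF sg ab nb w0_ok] by simp
  finally show ?thesis .
qed

lemma diffL: "(U (laplacian E) t *v evec a)$a - (U (laplacian E) t *v evec a)$b
   = exp (- (\<i> * of_real t) * lam E a b)"
  using U_agree(2)[OF sg ab nb w0_ok, of t] ab
  unfolding decompL by (simp add: evec_def)

lemma ebL: "U (laplacian E) t *v evec b = U (laplacian E) t *v evec a - exp (- (\<i> * of_real t) * lam E a b) *s vv"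
proof -
  have "evec b = evec a - vv" by simp
  then show ?thesis by (metis U_eigL[OF sg ab nb] matrix_vector_mult_diff_distrib)
qed

lemma swapH:
  assumes "2 * \<alpha> * t = pi * (2 * of_int m + 1)"
  shows "U HH t *v evec a = U (laplacian E) t *v evec b"
proof -
  have "- (\<i> * of_real t) * (2 * of_real \<alpha>) = - (\<i> * complex_of_real (pi * (2 * of_int m + 1)))"
    unfolding assms[symmetric] by (simp add: algebra_simps)
  then have e2: "exp (- (\<i> * of_real t) * (2 * of_real \<alpha>)) = -1" by (simp only: exp_odd)
  have "exp (- (\<i> * of_real t) * (lam E a b + 2 * of_real \<alpha>)) = - exp (- (\<i> * of_real t) * lam E a b)"
  proof -
    have "- (\<i> * of_real t) * (lam E a b + 2 * of_real \<alpha>) = - (\<i> * of_real t) * lam E a b + (- (\<i> * of_real t) * (2 * of_real \<alpha>))"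
      by (simp add: algebra_simps)
    then show ?thesis by (simp only: exp_add e2) simp
  qed
  then show ?thesis
    unfolding decompH ebL decompL by (simp add: vec_eq_iff algebra_simps)
qed

lemma part1a:
  assumes ap: "almost_periodic (laplacian E) a \<tau>"
    and cond: "\<forall>k. \<exists>m::int. 2 * \<alpha> * \<tau> k = pi * (2 * of_int m + 1)"
  shows "pgst HH a b \<tau>"
proof -
  obtain \<gamma> where lim: "(\<lambda>k. U (laplacian E) (\<tau> k) *v evec a) \<longlonglongrightarrow> \<gamma> *s evec a"
    using ap unfolding almost_periodic_def by blast
  let ?f = "\<lambda>k. U (laplacian E) (\<tau> k) *v evec a"
  have eq: "U HH (\<tau> k) *v evec a = ?f k - ((?f k)$a - (?f k)$b) *s vv" for k
  proof -
    obtain m where "2 * \<alpha> * \<tau> k = pi * (2 * of_int m + 1)" using cond by blast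
    then have "U HH (\<tau> k) *v evec a = U (laplacian E) (\<tau> k) *v evec b" by (rule swapH)
    then show ?thesis unfolding ebL diffL by simp
  qed
  have "(\<lambda>k. U HH (\<tau> k) *v evec a) \<longlonglongrightarrow> \<gamma> *s evec b"
  proof (rule vec_tendstoI)
    fix i
    have l: "(\<lambda>k. ?f k $ j) \<longlonglongrightarrow> (\<gamma> *s evec a) $ j" for j
      by (rule tendsto_vec_nth[OF lim])
    have "(\<lambda>k. ?f k $ i - (?f k $ a - ?f k $ b) * vv $ i) \<longlonglongrightarrow>
          (\<gamma> *s evec a) $ i - ((\<gamma> *s evec a) $ a - (\<gamma> *s evec a) $ b) * vv $ i"
      by (intro tendsto_intros l)
    moreover have "(\<gamma> *s evec a) $ i - ((\<gamma> *s evec a) $ a - (\<gamma> *s evec a) $ b) * vv $ i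
        = (\<gamma> *s evec b) $ i"
      using ab by (simp add: evec_def)
    ultimately have lim2: "(\<lambda>k. ?f k $ i - (?f k $ a - ?f k $ b) * vv $ i) \<longlonglongrightarrow> (\<gamma> *s evec b) $ i"
      by simp
    show "(\<lambda>k. (U HH (\<tau> k) *v evec a) $ i) \<longlonglongrightarrow> (\<gamma> *s evec b) $ i"
    proof -
      have "(\<lambda>k. (U HH (\<tau> k) *v evec a) $ i) = (\<lambda>k. ?f k $ i - (?f k $ a - ?f k $ b) * vv $ i)"
        by (rule ext) (simp only: eq vector_minus_component vector_smult_component)
      then show ?thesis using lim2 by simp
    qed
  qed
  then show ?thesis using ab unfolding pgst_def by blast
qed

end



lemma part1:
  fixes E :: "'n::finite \<Rightarrow> 'n \<Rightarrow> bool"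
  assumes sg: "simple_graph E" and ab: "a \<noteq> b" and nb: "nbhd E a - {b} = nbhd E b - {a}"
    and ap: "almost_periodic (laplacian E) a \<tau>"
    and cond: "\<forall>k. \<exists>m::int. 2 * \<alpha> * \<tau> k = pi * (2 * of_int m + 1)"
  shows "pgst (laplacian E + cscale (of_real \<alpha>) (Mab a b)) a b \<tau> \<and>
         pgst (laplacian E + cscale (of_real \<alpha>) (Mab a b)) b a \<tau>"
proof
  show "pgst (laplacian E + cscale (of_real \<alpha>) (Mab a b)) a b \<tau>"
    by (rule part1a[OF sg ab nb ap cond])
  have ba: "b \<noteq> a" using ab by simp
  have nb': "nbhd E b - {a} = nbhd E a - {b}" using nb by simp
  obtain \<gamma> where lim: "(\<lambda>k. U (laplacian E) (\<tau> k) *v evec a) \<longlonglongrightarrow> \<gamma> *s evec a"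
    using ap unfolding almost_periodic_def by blast
  have "U (laplacian E + cscale (of_real \<alpha>) (Mab a b)) (\<tau> k) *v evec b = U (laplacian E) (\<tau> k) *v evec a" for k
  proof -
    obtain m where "2 * \<alpha> * \<tau> k = pi * (2 * of_int m + 1)" using cond by blast
    from swapH[OF sg ba nb' this] show ?thesis by (simp add: Mab_sym)
  qed
  then show "pgst (laplacian E + cscale (of_real \<alpha>) (Mab a b)) b a \<tau>"
    using lim ba unfolding pgst_def by auto
qed

theorem theorem3p2:
  fixes E :: "'n::finite \<Rightarrow> 'n \<Rightarrow> bool"
    and a b p :: 'n and \<alpha> :: real and \<tau> :: "nat \<Rightarrow> real"
  assumes "simple_graph E" and "connected_graph E"
    and "a \<noteq> b"
    and "nbhd E a - {b} = nbhd E b - {a}"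
    and "almost_periodic (laplacian E) p \<tau>"
  shows "(p \<in> {a, b} \<and> (\<forall>k. \<exists>m::int. 2 * \<alpha> * \<tau> k = pi * (2 * of_int m + 1)) \<longrightarrow>
            pgst (laplacian E + cscale (of_real \<alpha>) (Mab a b)) a b \<tau> \<and>
            pgst (laplacian E + cscale (of_real \<alpha>) (Mab a b)) b a \<tau>)
       \<and> (p \<notin> {a, b} \<longrightarrow>
            almost_periodic (laplacian E + cscale (of_real \<alpha>) (Mab a b)) p \<tau>)"
proof (rule conjI; rule impI)
  assume h: "p \<in> {a, b} \<and> (\<forall>k. \<exists>m::int. 2 * \<alpha> * \<tau> k = pi * (2 * of_int m + 1))"
  show "pgst (laplacian E + cscale (of_real \<alpha>) (Mab a b)) a b \<tau> \<and>
        pgst (laplacian E + cscale (of_real \<alpha>) (Mab a b)) b a \<tau>"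
  proof (cases "p = a")
    case True
    then show ?thesis using part1[OF assms(1,3,4)] assms(5) h by blast
  next
    case False
    then have pb: "p = b" using h by blast
    have ba: "b \<noteq> a" using assms(3) by simp
    have nb': "nbhd E b - {a} = nbhd E a - {b}" using assms(4) by simp
    show ?thesis using part1[OF assms(1) ba nb', of \<tau> \<alpha>] assms(5) h pb by (auto simp: Mab_sym)
  qed
next
  assume h: "p \<notin> {a, b}"
  have w: "evec p $ a = evec p $ b" using h by (auto simp: evec_def)
  show "almost_periodic (laplacian E + cscale (of_real \<alpha>) (Mab a b)) p \<tau>"
    using assms(5) U_agree(1)[OF assms(1,3,4) w] unfolding almost_periodic_def by simp
qed


end
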